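(* Let $q\ge2$ and $d\ge2$ be integers and, for $\beta\ge0$, $B\in\mathbb R$, $r\in\mathbb R$, let $$f(r;\beta,B)=B+(d-1)\log\Big(\frac{e^{\beta+r}+q-1}{e^r+e^\beta+q-2}\Big).$$ There exists $\beta_-\in(0,\infty]$ (with $\beta_-=\infty$ if $d=2$ and $\beta_-<\infty$ if $d>2$) such that: for $0\le\beta\le\beta_-$ the map $r\mapsto f(r;\beta,B)$ has exactly one fixed point for every $B\in\mathbb R$; and for $\beta>\beta_-$ there exist real numbers $B_-(\beta)<B_+(\beta)$, depending smoothly on $\beta$, such that $f(\cdot;\beta,B)$ has exactly one fixed point if $B\notin[B_-(\beta),B_+(\beta)]$, exactly two if $B\in\{B_-(\beta),B_+(\beta)\}$, and exactly three if $B\in(B_-(\beta),B_+(\beta))$. When $\beta_-<\infty$, $B_\pm$ extend continuously to $\beta_-$ with $B_-(\beta_-)=B_+(\beta_-)$.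
   Context: No additional definitions are needed beyond the formula for $f$. *)

theory Defs
  imports "HOL-Analysis.Analysis"
begin

definition potts_f :: "nat \<Rightarrow> nat \<Rightarrow> real \<Rightarrow> real \<Rightarrow> real \<Rightarrow> real" where
  "potts_f q d \<beta> B r =
     B + (real d - 1) * ln ((exp (\<beta> + r) + real q - 1) / (exp r + exp \<beta> + real q - 2))"

definition fixed_points :: "nat \<Rightarrow> nat \<Rightarrow> real \<Rightarrow> real \<Rightarrow> real set" where
  "fixed_points q d \<beta> B = {r. potts_f q d \<beta> B r = r}"

text \<open>Smooth (C-infinity) on a set S: every iterated derivative is differentiable at every point of S
  (intended for open S).\<close>
definition smooth_on :: "real set \<Rightarrow> (real \<Rightarrow> real) \<Rightarrow> bool" where
  "smooth_on S g \<longleftrightarrow> (\<forall>k. \<forall>x\<in>S. ((deriv ^^ k) g) differentiable (at x))"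

end

theory Submission
  imports Defs
begin


inductive_set sm :: "real set \<Rightarrow> (real \<Rightarrow> real) set" for S where
  sm_const: "(\<lambda>x. c) \<in> sm S"
| sm_id: "(\<lambda>x. x) \<in> sm S"
| sm_add: "f \<in> sm S \<Longrightarrow> g \<in> sm S \<Longrightarrow> (\<lambda>x. f x + g x) \<in> sm S"
| sm_mult: "f \<in> sm S \<Longrightarrow> g \<in> sm S \<Longrightarrow> (\<lambda>x. f x * g x) \<in> sm S"
| sm_exp: "f \<in> sm S \<Longrightarrow> (\<lambda>x. exp (f x)) \<in> sm S"
| sm_ln: "f \<in> sm S \<Longrightarrow> (\<forall>x\<in>S. f x > 0) \<Longrightarrow> (\<lambda>x. ln (f x)) \<in> sm S"
| sm_inv: "f \<in> sm S \<Longrightarrow> (\<forall>x\<in>S. f x \<noteq> 0) \<Longrightarrow> (\<lambda>x. inverse (f x)) \<in> sm S"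
| sm_sqrt: "f \<in> sm S \<Longrightarrow> (\<forall>x\<in>S. f x > 0) \<Longrightarrow> (\<lambda>x. sqrt (f x)) \<in> sm S"

lemma sm_uminus: "f \<in> sm S \<Longrightarrow> (\<lambda>x. - f x) \<in> sm S"
  using sm_mult[OF sm_const[of "-1"], of f] by simp

lemma sm_diff: "f \<in> sm S \<Longrightarrow> g \<in> sm S \<Longrightarrow> (\<lambda>x. f x - g x) \<in> sm S"
  using sm_add[OF _ sm_uminus, of f S g] by simp

lemma sm_divide: "f \<in> sm S \<Longrightarrow> g \<in> sm S \<Longrightarrow> (\<forall>x\<in>S. g x \<noteq> 0) \<Longrightarrow> (\<lambda>x. f x / g x) \<in> sm S"
  using sm_mult[OF _ sm_inv, of f S g] by (simp add: divide_inverse)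

lemma sm_deriv:
  assumes "f \<in> sm S"
  shows "\<exists>f'\<in>sm S. \<forall>x\<in>S. (f has_real_derivative f' x) (at x)"
  using assms
proof induction
  case (sm_const c)
  show ?case by (rule bexI[of _ "\<lambda>x. 0"]) (auto intro: sm.intros)
next
  case sm_id
  show ?case by (rule bexI[of _ "\<lambda>x. 1"]) (auto intro: sm.intros derivative_eq_intros)
next
  case (sm_add f g)
  then obtain f' g' where "f' \<in> sm S" "g' \<in> sm S" "\<forall>x\<in>S. (f has_real_derivative f' x) (at x)"
    "\<forall>x\<in>S. (g has_real_derivative g' x) (at x)" by blast
  then show ?case by (intro bexI[of _ "\<lambda>x. f' x + g' x"]) (auto intro: sm.intros derivative_eq_intros)
next
  case (sm_mult f g)
  then obtain f' g' where "f' \<in> sm S" "g' \<in> sm S" "\<forall>x\<in>S. (f has_real_derivative f' x) (at x)"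
    "\<forall>x\<in>S. (g has_real_derivative g' x) (at x)" by blast
  then show ?case
    by (intro bexI[of _ "\<lambda>x. f' x * g x + f x * g' x"])
      (auto intro!: sm.intros derivative_eq_intros sm_mult simp: sm_mult.hyps)
next
  case (sm_exp f)
  then obtain f' where "f' \<in> sm S" "\<forall>x\<in>S. (f has_real_derivative f' x) (at x)" by blast
  then show ?case
    by (intro bexI[of _ "\<lambda>x. f' x * exp (f x)"])
      (auto intro!: sm.intros derivative_eq_intros simp: sm_exp.hyps)
next
  case (sm_ln f)
  then obtain f' where "f' \<in> sm S" "\<forall>x\<in>S. (f has_real_derivative f' x) (at x)" by blast
  then show ?case
    by (intro bexI[of _ "\<lambda>x. f' x * inverse (f x)"])
      (use sm_ln.hyps in \<open>force intro!: sm.intros derivative_eq_intros simp: divide_inverse\<close>)+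
next
  case (sm_inv f)
  then obtain f' where "f' \<in> sm S" "\<forall>x\<in>S. (f has_real_derivative f' x) (at x)" by blast
  then show ?case
    by (intro bexI[of _ "\<lambda>x. (- f' x) * (inverse (f x) * inverse (f x))"])
      (auto intro!: sm.intros sm_uminus derivative_eq_intros simp: sm_inv.hyps)
next
  case (sm_sqrt f)
  then obtain f' where f': "f' \<in> sm S" "\<forall>x\<in>S. (f has_real_derivative f' x) (at x)" by blast
  have A: "(\<lambda>x. 2 * sqrt (f x)) \<in> sm S" by (rule sm_mult[OF sm_const sm.sm_sqrt[OF sm_sqrt.hyps]])
  have B: "\<forall>x\<in>S. 2 * sqrt (f x) \<noteq> 0" using sm_sqrt.hyps by auto
  have M1: "(\<lambda>x. f' x * inverse (2 * sqrt (f x))) \<in> sm S"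
    by (rule sm_mult[OF f'(1) sm_inv[OF A B]])
  have M2: "\<forall>x\<in>S. ((\<lambda>x. sqrt (f x)) has_real_derivative f' x * inverse (2 * sqrt (f x))) (at x)"
  proof
    fix x assume x: "x \<in> S"
    have fx: "f x > 0" using sm_sqrt.hyps x by auto
    have "((\<lambda>x. sqrt (f x)) has_real_derivative inverse (sqrt (f x)) / 2 * f' x) (at x)"
      by (rule DERIV_chain2[of sqrt _ f x, OF DERIV_real_sqrt[OF fx]]) (use f' x in auto)
    moreover have "inverse (sqrt (f x)) / 2 * f' x = f' x * inverse (2 * sqrt (f x))"
      by (simp add: field_simps)
    ultimately show "((\<lambda>x. sqrt (f x)) has_real_derivative f' x * inverse (2 * sqrt (f x))) (at x)" by metis
  qed
  show ?case by (rule bexI[where x="\<lambda>x. f' x * inverse (2 * sqrt (f x))"]) (use M1 M2 in auto)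
qed

lemma sm_smooth:
  assumes "open S" "f \<in> sm S"
  shows "smooth_on S f"
proof -
  have K: "\<exists>g\<in>sm S. \<forall>x\<in>S. (deriv ^^ k) f x = g x" for k
  proof (induction k)
    case 0 then show ?case using assms by auto
  next
    case (Suc k)
    then obtain g where g: "g \<in> sm S" "\<forall>x\<in>S. (deriv ^^ k) f x = g x" by blast
    then obtain g' where g': "g' \<in> sm S" "\<forall>x\<in>S. (g has_real_derivative g' x) (at x)"
      using sm_deriv by blast
    have "((deriv ^^ k) f has_real_derivative g' x) (at x)" if "x \<in> S" for x
      by (rule has_field_derivative_transform_within_open[OF g'(2)[rule_format, OF that] assms(1) that])
        (use g in auto)
    then show ?case using g' by (auto intro!: bexI[of _ g'] DERIV_imp_deriv)
  qed
  then have "((deriv ^^ k) f) differentiable (at x)" if "x \<in> S" for k x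
  proof -
    obtain g where g: "g \<in> sm S" "\<forall>x\<in>S. (deriv ^^ k) f x = g x" using K by blast
    then obtain g' where g': "g' \<in> sm S" "\<forall>x\<in>S. (g has_real_derivative g' x) (at x)"
      using sm_deriv by blast
    have "((deriv ^^ k) f has_real_derivative g' x) (at x)"
      by (rule has_field_derivative_transform_within_open[OF g'(2)[rule_format, OF that] assms(1) that])
        (use g in auto)
    then show ?thesis unfolding real_differentiable_def by blast
  qed
  then show ?thesis unfolding smooth_on_def by blast
qed



lemma inc_on:
  fixes h h' :: "real \<Rightarrow> real"
  assumes der: "\<And>r. (h has_real_derivative h' r) (at r)"
    and pos: "\<And>\<xi>. a < \<xi> \<Longrightarrow> \<xi> < b \<Longrightarrow> h' \<xi> > 0" and ab: "a < b"
  shows "h a < h b"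
proof -
  obtain z where "a < z" "z < b" "h b - h a = (b - a) * h' z"
    using MVT2[OF ab, of h h'] der by blast
  moreover have "h' z > 0" using pos calculation by auto
  moreover have "(b - a) * h' z > 0" using ab calculation by simp
  ultimately show ?thesis by linarith
qed

lemma dec_on:
  fixes h h' :: "real \<Rightarrow> real"
  assumes der: "\<And>r. (h has_real_derivative h' r) (at r)"
    and neg: "\<And>\<xi>. a < \<xi> \<Longrightarrow> \<xi> < b \<Longrightarrow> h' \<xi> < 0" and ab: "a < b"
  shows "h a > h b"
proof -
  obtain z where "a < z" "z < b" "h b - h a = (b - a) * h' z"
    using MVT2[OF ab, of h h'] der by blast
  moreover have "h' z < 0" using neg calculation by auto
  moreover have "(b - a) * h' z < 0" using ab calculation by (simp add: mult_pos_neg)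
  ultimately show ?thesis by linarith
qed

lemma nondec_step:
  fixes h h' :: "real \<Rightarrow> real"
  assumes der: "\<And>r. (h has_real_derivative h' r) (at r)"
    and nn: "\<And>r. h' r \<ge> 0" and ab: "a < b"
  obtains z where "a < z" "z < b" "h b - h a = (b - a) * h' z"
  using MVT2[OF ab, of h h'] der by blast

lemma one_count:
  fixes h h' :: "real \<Rightarrow> real"
  assumes der: "\<And>r. (h has_real_derivative h' r) (at r)"
    and lo: "\<And>y. \<exists>z. h z < y" and hi: "\<And>y. \<exists>z. h z > y"
    and nn: "\<And>r. h' r \<ge> 0" and z1: "\<And>r s. h' r = 0 \<Longrightarrow> h' s = 0 \<Longrightarrow> r = s"
  shows "card {r. h r = B} = 1"
proof -
  have smono: "h a < h b" if "a < b" for a b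
  proof -
    define m where "m = (a + b) / 2"
    have am: "a < m" "m < b" using that by (auto simp: m_def)
    obtain z1 where z1p: "a < z1" "z1 < m" "h m - h a = (m - a) * h' z1"
      using nondec_step[OF der nn am(1)] by blast
    obtain z2 where z2p: "m < z2" "z2 < b" "h b - h m = (b - m) * h' z2"
      using nondec_step[OF der nn am(2)] by blast
    have "z1 \<noteq> z2" using z1p z2p by auto
    then have "\<not> (h' z1 = 0 \<and> h' z2 = 0)" using z1 by blast
    then have "h' z1 > 0 \<or> h' z2 > 0" using nn[of z1] nn[of z2] by linarith
    moreover have "h m - h a \<ge> 0" "h b - h m \<ge> 0" using z1p z2p am nn by auto
    ultimately have "h m - h a > 0 \<or> h b - h m > 0" using z1p z2p am by auto
    then show ?thesis using \<open>h m - h a \<ge> 0\<close> \<open>h b - h m \<ge> 0\<close> by linarith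
  qed
  have cont: "isCont h x" for x using der DERIV_isCont by blast
  obtain z where z: "h z < B" using lo by blast
  obtain w where w: "h w > B" using hi by blast
  have "z < w"
  proof (rule ccontr)
    assume "\<not> z < w" then have "w \<le> z" by simp
    then have "h w \<le> h z" using smono[of w z] by (cases "w = z") auto
    with z w show False by simp
  qed
  then have "\<exists>x. z \<le> x \<and> x \<le> w \<and> h x = B" using z w cont by (intro IVT) auto
  then obtain s where s: "h s = B" by blast
  have u: "r = s" if "h r = B" for r
    using that s smono[of r s] smono[of s r] by (cases r s rule: linorder_cases) auto
  have "{r. h r = B} = {s}" using u s by blast
  then show ?thesis by simp
qed

lemma three_count:
  fixes h h' :: "real \<Rightarrow> real"
  assumes der: "\<And>r. (h has_real_derivative h' r) (at r)"
    and lo: "\<And>y. \<exists>z. h z < y" and hi: "\<And>y. \<exists>z. h z > y"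
    and r12: "r1 < r2"
    and p1: "\<And>r. r < r1 \<Longrightarrow> h' r > 0" and n2: "\<And>r. r1 < r \<Longrightarrow> r < r2 \<Longrightarrow> h' r < 0"
    and p3: "\<And>r. r2 < r \<Longrightarrow> h' r > 0"
  shows "h r2 < h r1"
    and "B < h r2 \<or> h r1 < B \<Longrightarrow> card {r. h r = B} = 1"
    and "B = h r2 \<or> B = h r1 \<Longrightarrow> card {r. h r = B} = 2"
    and "h r2 < B \<and> B < h r1 \<Longrightarrow> card {r. h r = B} = 3"
proof -
  have cont: "isCont h x" for x using der DERIV_isCont by blast
  have i1: "h a < h b" if "a < b" "b \<le> r1" for a b
    by (rule inc_on[OF der _ that(1)]) (use that p1 in auto)
  have d2: "h a > h b" if "a < b" "r1 \<le> a" "b \<le> r2" for a b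
    by (rule dec_on[OF der _ that(1)]) (use that n2 in auto)
  have i3: "h a < h b" if "a < b" "r2 \<le> a" for a b
    by (rule inc_on[OF der _ that(1)]) (use that p3 in auto)
  show M: "h r2 < h r1" using d2[of r1 r2] r12 by simp
  define M m where "M = h r1" and "m = h r2"
  have L1: "h r \<le> M" if "r \<le> r1" for r using i1[of r r1] that unfolding M_def by (cases "r = r1") auto
  have L1s: "h r < M" if "r < r1" for r using i1[of r r1] that unfolding M_def by simp
  have L2: "m \<le> h r \<and> h r \<le> M" if "r1 \<le> r" "r \<le> r2" for r
    using d2[of r1 r] d2[of r r2] that unfolding M_def m_def
    by (cases "r = r1"; cases "r = r2") auto
  have L2s: "m < h r \<and> h r < M" if "r1 < r" "r < r2" for r
    using d2[of r1 r] d2[of r r2] that unfolding M_def m_def by auto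
  have L3: "m \<le> h r" if "r2 \<le> r" for r using i3[of r2 r] that unfolding m_def by (cases "r = r2") auto
  have L3s: "m < h r" if "r2 < r" for r using i3[of r2 r] that unfolding m_def by simp
  have geq_m: "m \<le> h r" if "r1 \<le> r" for r using L2[of r] L3[of r] that by (cases "r \<le> r2") auto
  have leq_M: "h r \<le> M" if "r \<le> r2" for r using L1[of r] L2[of r] that by (cases "r \<le> r1") auto
  have E1: "\<exists>r\<le>r1. h r = B" if "B \<le> M" for B
  proof -
    obtain z where z: "h z < min B m" using lo by blast
    then have "z < r1" using geq_m[of z] by (cases "z < r1") auto
    then have "\<exists>x. z \<le> x \<and> x \<le> r1 \<and> h x = B" using z that cont unfolding M_def by (intro IVT) auto
    then show ?thesis by blast
  qed
  have E3: "\<exists>r\<ge>r2. h r = B" if "m \<le> B" for B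
  proof -
    obtain z where z: "h z > max B M" using hi by blast
    then have "z > r2" using leq_M[of z] by (cases "z > r2") auto
    then have "\<exists>x. r2 \<le> x \<and> x \<le> z \<and> h x = B" using z that cont unfolding m_def by (intro IVT) auto
    then show ?thesis by blast
  qed
  have E2: "\<exists>r. r1 \<le> r \<and> r \<le> r2 \<and> h r = B" if "m \<le> B" "B \<le> M" for B
  proof -
    have "\<exists>x. r1 \<le> x \<and> x \<le> r2 \<and> h x = B" using that cont r12 unfolding m_def M_def by (intro IVT2) auto
    then show ?thesis by blast
  qed
  have U1: "x = y" if "x \<le> r1" "y \<le> r1" "h x = h y" for x y
    using i1[of x y] i1[of y x] that by (cases x y rule: linorder_cases) auto
  have U2: "x = y" if "r1 \<le> x" "x \<le> r2" "r1 \<le> y" "y \<le> r2" "h x = h y" for x y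
    using d2[of x y] d2[of y x] that by (cases x y rule: linorder_cases) auto
  have U3: "x = y" if "r2 \<le> x" "r2 \<le> y" "h x = h y" for x y
    using i3[of x y] i3[of y x] that by (cases x y rule: linorder_cases) auto
  show "card {r. h r = B} = 1" if "B < h r2 \<or> h r1 < B"
  proof (cases "B < m")
    case True
    then have "B \<le> M" using M unfolding M_def m_def by simp
    then obtain s where s: "s \<le> r1" "h s = B" using E1[of B] by blast
    have u: "r = s" if "h r = B" for r
    proof -
      have "r < r1" using geq_m[of r] True that by force
      then show "r = s" using U1[of r s] s that by auto
    qed
    have "{r. h r = B} = {s}" using u s by blast
    then show ?thesis by simp
  next
    case False
    then have BM: "M < B" using that unfolding M_def m_def by auto
    then have "m \<le> B" using M unfolding M_def m_def by simp
    then obtain s where s: "s \<ge> r2" "h s = B" using E3[of B] by blast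
    have u: "r = s" if "h r = B" for r
    proof -
      have "r > r2" using leq_M[of r] BM that by force
      then show "r = s" using U3[of r s] s that by auto
    qed
    have "{r. h r = B} = {s}" using u s by blast
    then show ?thesis by simp
  qed
  show "card {r. h r = B} = 2" if "B = h r2 \<or> B = h r1"
  proof (cases "B = m")
    case True
    then have "B \<le> M" using M unfolding M_def m_def by simp
    then obtain s where s: "s \<le> r1" "h s = B" using E1[of B] by blast
    have "s < r1" using s True M unfolding M_def m_def by (cases "s = r1") auto
    have u: "r = s" if r: "h r = B" "r \<noteq> r2" for r
    proof -
      show "r = s"
      proof (cases "r \<le> r1")
        case True then show ?thesis using U1[of r s] s r by auto
      next
        case False
        then show ?thesis
        proof (cases "r \<le> r2")
          case True then show ?thesis using U2[of r r2] r \<open>B = m\<close> False r12 unfolding m_def by auto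
        next
          case F2: False then show ?thesis using U3[of r r2] r \<open>B = m\<close> unfolding m_def by auto
        qed
      qed
    qed
    have "{r. h r = B} = {s, r2}"
    proof (rule set_eqI)
      fix r show "r \<in> {r. h r = B} \<longleftrightarrow> r \<in> {s, r2}" using u[of r] s True unfolding m_def by auto
    qed
    moreover have "s \<noteq> r2" using \<open>s < r1\<close> r12 by auto
    ultimately show ?thesis by simp
  next
    case False
    then have BM: "B = M" using that unfolding M_def m_def by auto
    then have "m \<le> B" using M unfolding M_def m_def by simp
    then obtain s where s: "s \<ge> r2" "h s = B" using E3[of B] by blast
    have "s > r2" using s BM M unfolding M_def m_def by (cases "s = r2") auto
    have u: "r = s" if r: "h r = B" "r \<noteq> r1" for r
    proof -
      show "r = s"
      proof (cases "r \<ge> r2")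
        case True then show ?thesis using U3[of r s] s r by auto
      next
        case False
        then show ?thesis
        proof (cases "r \<ge> r1")
          case True then show ?thesis using U2[of r r1] r BM False r12 unfolding M_def by auto
        next
          case F2: False then show ?thesis using U1[of r r1] r BM unfolding M_def by auto
        qed
      qed
    qed
    have "{r. h r = B} = {r1, s}"
    proof (rule set_eqI)
      fix r show "r \<in> {r. h r = B} \<longleftrightarrow> r \<in> {r1, s}" using u[of r] s BM unfolding M_def by auto
    qed
    moreover have "s \<noteq> r1" using \<open>s > r2\<close> r12 by auto
    ultimately show ?thesis by simp
  qed
  show "card {r. h r = B} = 3" if "h r2 < B \<and> B < h r1"
  proof -
    have B: "m < B" "B < M" using that unfolding M_def m_def by auto
    obtain s1 where s1: "s1 \<le> r1" "h s1 = B" using E1[of B] B by auto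
    obtain s2 where s2: "r1 \<le> s2" "s2 \<le> r2" "h s2 = B" using E2[of B] B by auto
    obtain s3 where s3: "r2 \<le> s3" "h s3 = B" using E3[of B] B by auto
    have "s1 \<noteq> r1" "s2 \<noteq> r1" "s2 \<noteq> r2" "s3 \<noteq> r2" using s1 s2 s3 B unfolding M_def m_def by auto
    then have lt: "s1 < s2" "s2 < s3" using s1 s2 s3 by auto
    have u: "r = s3" if r: "h r = B" "r \<noteq> s1" "r \<noteq> s2" for r
    proof -
      show "r = s3"
      proof (cases "r \<le> r1")
        case True then show ?thesis using U1[of r s1] s1 r by auto
      next
        case False
        then show ?thesis
        proof (cases "r \<le> r2")
          case True then show ?thesis using U2[of r s2] r s2 False by auto
        next
          case F2: False then show ?thesis using U3[of r s3] r s3 by auto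
        qed
      qed
    qed
    have "{r. h r = B} = {s1, s2, s3}"
    proof (rule set_eqI)
      fix r show "r \<in> {r. h r = B} \<longleftrightarrow> r \<in> {s1, s2, s3}" using u[of r] s1 s2 s3 by auto
    qed
    then show ?thesis using lt by simp
  qed
qed



definition Cc :: "nat \<Rightarrow> nat \<Rightarrow> real \<Rightarrow> real" where
  "Cc q d \<beta> = real d * (real q - 1) - (real d - 2) * (exp \<beta> * (exp \<beta> + real q - 2))"
definition Dl :: "nat \<Rightarrow> nat \<Rightarrow> real \<Rightarrow> real" where
  "Dl q d \<beta> = Cc q d \<beta> * Cc q d \<beta> - 4 * exp \<beta> * (real q - 1) * (exp \<beta> + real q - 2)"
definition X1 :: "nat \<Rightarrow> nat \<Rightarrow> real \<Rightarrow> real" where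
  "X1 q d \<beta> = (- Cc q d \<beta> - sqrt (Dl q d \<beta>)) / (2 * exp \<beta>)"
definition X2 :: "nat \<Rightarrow> nat \<Rightarrow> real \<Rightarrow> real" where
  "X2 q d \<beta> = (- Cc q d \<beta> + sqrt (Dl q d \<beta>)) / (2 * exp \<beta>)"
definition hh :: "nat \<Rightarrow> nat \<Rightarrow> real \<Rightarrow> real \<Rightarrow> real" where
  "hh q d \<beta> r = r - (real d - 1) * (ln (exp \<beta> * exp r + real q - 1) - ln (exp r + exp \<beta> + real q - 2))"
definition PP :: "nat \<Rightarrow> nat \<Rightarrow> real \<Rightarrow> real \<Rightarrow> real" where
  "PP q d \<beta> x = exp \<beta> * x * x + Cc q d \<beta> * x + (real q - 1) * (exp \<beta> + real q - 2)"
definition hdv :: "nat \<Rightarrow> nat \<Rightarrow> real \<Rightarrow> real \<Rightarrow> real" where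
  "hdv q d \<beta> r = PP q d \<beta> (exp r) / ((exp \<beta> * exp r + real q - 1) * (exp r + exp \<beta> + real q - 2))"

lemma pos_ND:
  assumes "q \<ge> 2"
  shows "exp \<beta> * exp r + real q - 1 > 0" "exp r + exp \<beta> + real q - 2 > 0"
proof -
  have q: "real q \<ge> 2" using assms by simp
  have "exp \<beta> * exp r > 0" "exp r > 0" "exp \<beta> > 0" by auto
  then show "exp \<beta> * exp r + real q - 1 > 0" "exp r + exp \<beta> + real q - 2 > 0" using q by linarith+
qed

lemma fp_eq:
  assumes "q \<ge> 2"
  shows "fixed_points q d \<beta> B = {r. hh q d \<beta> r = B}"
proof -
  have "ln ((exp (\<beta> + r) + real q - 1) / (exp r + exp \<beta> + real q - 2))
     = ln (exp \<beta> * exp r + real q - 1) - ln (exp r + exp \<beta> + real q - 2)" for r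
  proof -
    have "exp \<beta> * exp r + real q - 1 > 0" "exp r + exp \<beta> + real q - 2 > 0"
      using pos_ND[OF assms] by auto
    then show ?thesis by (simp add: exp_add ln_div)
  qed
  then show ?thesis unfolding fixed_points_def potts_f_def hh_def by auto
qed

lemma hh_der:
  assumes "q \<ge> 2"
  shows "(hh q d \<beta> has_real_derivative hdv q d \<beta> r) (at r)"
proof -
  define t x where "t = exp \<beta>" and "x = exp r"
  have t: "t > 0" and x: "x > 0" by (auto simp: t_def x_def)
  have N: "t * x + real q - 1 > 0" and D: "x + t + real q - 2 > 0"
    using pos_ND[OF assms] unfolding t_def x_def by auto
  have d1: "((\<lambda>r. ln (exp \<beta> * exp r + real q - 1)) has_real_derivative t * x / (t * x + real q - 1)) (at r)"
    using N unfolding t_def x_def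
    by (auto intro!: derivative_eq_intros)
  have d2: "((\<lambda>r. ln (exp r + exp \<beta> + real q - 2)) has_real_derivative x / (x + t + real q - 2)) (at r)"
    using D unfolding t_def x_def
    by (auto intro!: derivative_eq_intros)
  have "(hh q d \<beta> has_real_derivative
     1 - (real d - 1) * (t * x / (t * x + real q - 1) - x / (x + t + real q - 2))) (at r)"
    using DERIV_diff[OF DERIV_ident DERIV_cmult[OF DERIV_diff[OF d1 d2], of "real d - 1"]]
    unfolding hh_def[abs_def] by simp
  moreover have "1 - (real d - 1) * (t * x / (t * x + real q - 1) - x / (x + t + real q - 2))
     = hdv q d \<beta> r"
  proof -
    define NN DD where "NN = t * x + real q - 1" and "DD = x + t + real q - 2"
    have NN: "NN > 0" and DD: "DD > 0" using N D by (auto simp: NN_def DD_def)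
    have id: "NN * DD - (real d - 1) * (t * x * DD - x * NN) = PP q d \<beta> x"
      unfolding PP_def Cc_def NN_def DD_def t_def[symmetric] by (simp add: algebra_simps)
    have "1 - (real d - 1) * (t * x / NN - x / DD) = (NN * DD - (real d - 1) * (t * x * DD - x * NN)) / (NN * DD)"
      using NN DD by (simp add: field_simps)
    also have "\<dots> = PP q d \<beta> x / (NN * DD)" by (simp only: id)
    also have "\<dots> = hdv q d \<beta> r" unfolding hdv_def NN_def DD_def t_def x_def by simp
    finally show ?thesis unfolding NN_def DD_def .
  qed
  ultimately show ?thesis by simp
qed

lemma hh_bound:
  assumes "q \<ge> 2" "d \<ge> 1" "\<beta> \<ge> 0"
  shows "\<bar>hh q d \<beta> r - r\<bar> \<le> (real d - 1) * ln (exp \<beta> + real q - 2)"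
proof -
  define t x where "t = exp \<beta>" and "x = exp r"
  have t: "t \<ge> 1" and x: "x > 0" using assms by (auto simp: t_def x_def)
  define N D where "N = t * x + real q - 1" and "D = x + t + real q - 2"
  have N: "N > 0" and D: "D > 0" using pos_ND[OF assms(1)] by (auto simp: N_def D_def t_def x_def)
  have q: "real q \<ge> 2" using assms by simp
  have tp: "t > 0" using t by simp
  have "t * D - N = (t - 1) * (t + real q - 1)" unfolding N_def D_def by (simp add: algebra_simps)
  moreover have "(t - 1) * (t + real q - 1) \<ge> 0" using t q by (intro mult_nonneg_nonneg) auto
  ultimately have ND: "N \<le> t * D" by linarith
  have tD: "t * D > 0" using tp D by simp
  have "ln N \<le> ln (t * D)" using ND N tD by simp
  also have "ln (t * D) = ln t + ln D" using tp D by (simp add: ln_mult)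
  finally have u: "ln N \<le> ln t + ln D" .
  have c1: "t + real q - 2 \<ge> 1" using t q by linarith
  have "(t + real q - 2) * N - D = x * ((t + real q - 2) * t - 1) + (t + real q - 2) * (real q - 2)"
    unfolding N_def D_def by (simp add: algebra_simps)
  moreover have "(t + real q - 2) * t \<ge> 1" using c1 t by (metis mult_mono' mult_1 zero_le_one)
  then have "x * ((t + real q - 2) * t - 1) \<ge> 0" using x by simp
  moreover have "(t + real q - 2) * (real q - 2) \<ge> 0" using c1 q by simp
  ultimately have DN: "D \<le> (t + real q - 2) * N" by linarith
  have cN: "(t + real q - 2) * N > 0" using c1 N by simp
  have "ln D \<le> ln ((t + real q - 2) * N)" using DN D cN by simp
  also have "\<dots> = ln (t + real q - 2) + ln N" using c1 N by (simp add: ln_mult)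
  finally have l: "ln D \<le> ln (t + real q - 2) + ln N" .
  have lt: "ln t \<le> ln (t + real q - 2)" using t q tp by simp
  have lt0: "0 \<le> ln t" using t by simp
  have "\<bar>ln N - ln D\<bar> \<le> ln (t + real q - 2)" using u l lt lt0 by linarith
  moreover have "hh q d \<beta> r - r = - (real d - 1) * (ln N - ln D)"
    unfolding hh_def N_def D_def t_def x_def by (simp add: algebra_simps)
  ultimately show ?thesis using assms unfolding t_def[symmetric]
    by (simp add: abs_mult mult_left_mono)
qed

lemma hh_lo_hi:
  assumes "q \<ge> 2" "d \<ge> 1" "\<beta> \<ge> 0"
  shows "\<exists>z. hh q d \<beta> z < y" "\<exists>z. hh q d \<beta> z > y"
proof -
  define G where "G = (real d - 1) * ln (exp \<beta> + real q - 2)"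
  have b: "\<bar>hh q d \<beta> r - r\<bar> \<le> G" for r using hh_bound[OF assms] unfolding G_def by blast
  show "\<exists>z. hh q d \<beta> z < y" using b[of "y - G - 1"] by (intro exI[of _ "y - G - 1"]) linarith
  show "\<exists>z. hh q d \<beta> z > y" using b[of "y + G + 1"] by (intro exI[of _ "y + G + 1"]) linarith
qed

lemma hdv_sign:
  assumes "q \<ge> 2"
  shows "hdv q d \<beta> r > 0 \<longleftrightarrow> PP q d \<beta> (exp r) > 0"
    "hdv q d \<beta> r < 0 \<longleftrightarrow> PP q d \<beta> (exp r) < 0"
    "hdv q d \<beta> r = 0 \<longleftrightarrow> PP q d \<beta> (exp r) = 0"
proof -
  have "(exp \<beta> * exp r + real q - 1) * (exp r + exp \<beta> + real q - 2) > 0"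
    using pos_ND[OF assms] by (intro mult_pos_pos)
  then show "hdv q d \<beta> r > 0 \<longleftrightarrow> PP q d \<beta> (exp r) > 0"
    "hdv q d \<beta> r < 0 \<longleftrightarrow> PP q d \<beta> (exp r) < 0"
    "hdv q d \<beta> r = 0 \<longleftrightarrow> PP q d \<beta> (exp r) = 0"
    unfolding hdv_def by (auto simp: divide_pos_pos zero_less_divide_iff divide_less_0_iff)
qed

lemma Dl_factor:
  "Dl q d \<beta> = (exp \<beta> * (exp \<beta> + real q - 2) - (real q - 1)) *
     ((real d - 2)^2 * (exp \<beta> * (exp \<beta> + real q - 2)) - (real q - 1) * (real d)^2)"
  unfolding Dl_def Cc_def by (simp add: algebra_simps power2_eq_square)

lemma PP_square: "4 * exp \<beta> * PP q d \<beta> x = (2 * exp \<beta> * x + Cc q d \<beta>)^2 - Dl q d \<beta>"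
  unfolding PP_def Dl_def by (simp add: algebra_simps power2_eq_square)

lemma PP_nonneg:
  assumes "Dl q d \<beta> \<le> 0"
  shows "PP q d \<beta> x \<ge> 0" "PP q d \<beta> x = 0 \<Longrightarrow> PP q d \<beta> y = 0 \<Longrightarrow> x = y"
proof -
  have e: "exp \<beta> > 0" by simp
  have "4 * exp \<beta> * PP q d \<beta> x \<ge> 0" using PP_square[of \<beta> q d x] assms zero_le_power2[of "2 * exp \<beta> * x + Cc q d \<beta>"] by linarith
  then show "PP q d \<beta> x \<ge> 0" using e by (simp add: zero_le_mult_iff)
  assume x0: "PP q d \<beta> x = 0" and y0: "PP q d \<beta> y = 0"
  have "(2 * exp \<beta> * x + Cc q d \<beta>)^2 = Dl q d \<beta>" "(2 * exp \<beta> * y + Cc q d \<beta>)^2 = Dl q d \<beta>"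
    using PP_square[of \<beta> q d x] PP_square[of \<beta> q d y] x0 y0 by auto
  then have "2 * exp \<beta> * x + Cc q d \<beta> = 0" "2 * exp \<beta> * y + Cc q d \<beta> = 0"
    using assms zero_le_power2[of "2 * exp \<beta> * x + Cc q d \<beta>"] zero_le_power2[of "2 * exp \<beta> * y + Cc q d \<beta>"]
    by (metis power_eq_0_iff order_antisym)+
  then have "2 * exp \<beta> * x = 2 * exp \<beta> * y" by linarith
  then show "x = y" using e by simp
qed

lemma PP_roots:
  assumes "Dl q d \<beta> > 0"
  shows "PP q d \<beta> x = exp \<beta> * (x - X1 q d \<beta>) * (x - X2 q d \<beta>)"
proof -
  have s: "sqrt (Dl q d \<beta>) * sqrt (Dl q d \<beta>) = Dl q d \<beta>" using assms by simp
  have e: "exp \<beta> \<noteq> 0" by simp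
  define C Q where "C = Cc q d \<beta>" and "Q = sqrt (Dl q d \<beta>)"
  define t where "t = exp \<beta>"
  have tp: "t \<noteq> 0" using e t_def by simp
  have sum: "X1 q d \<beta> + X2 q d \<beta> = - C / t"
    unfolding X1_def X2_def C_def[symmetric] Q_def[symmetric] t_def[symmetric] using tp
    by (simp add: field_simps)
  have prod: "X1 q d \<beta> * X2 q d \<beta> = (C * C - Q * Q) / (4 * t * t)"
    unfolding X1_def X2_def C_def[symmetric] Q_def[symmetric] t_def[symmetric] using tp
    by (simp add: field_simps)
  have QQ: "C * C - Q * Q = 4 * t * (real q - 1) * (t + real q - 2)"
    using s unfolding Q_def C_def t_def Dl_def by simp
  have "t * (x - X1 q d \<beta>) * (x - X2 q d \<beta>) = t * x * x - t * (X1 q d \<beta> + X2 q d \<beta>) * x + t * (X1 q d \<beta> * X2 q d \<beta>)"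
    by (simp add: algebra_simps)
  also have "\<dots> = t * x * x + C * x + (real q - 1) * (t + real q - 2)"
    unfolding sum prod QQ using tp by (simp add: field_simps)
  finally show ?thesis unfolding PP_def C_def t_def by simp
qed



lemma Cc_sm: "(\<lambda>\<beta>. Cc q d \<beta>) \<in> sm S"
  unfolding Cc_def by (intro sm_diff sm_mult sm_add sm_const sm_exp sm_id)

lemma Dl_sm: "(\<lambda>\<beta>. Dl q d \<beta>) \<in> sm S"
  unfolding Dl_def by (intro sm_diff sm_mult sm_add sm_const sm_exp sm_id Cc_sm)

lemma X1_sm: assumes "\<forall>\<beta>\<in>S. Dl q d \<beta> > 0" shows "(\<lambda>\<beta>. X1 q d \<beta>) \<in> sm S"
proof -
  have a: "(\<lambda>\<beta>. sqrt (Dl q d \<beta>)) \<in> sm S" by (rule sm_sqrt[OF Dl_sm assms])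
  have b: "(\<lambda>\<beta>. 2 * exp \<beta>) \<in> sm S" by (intro sm_mult sm_const sm_exp sm_id)
  show ?thesis unfolding X1_def
    by (rule sm_divide[OF sm_diff[OF sm_uminus[OF Cc_sm] a] b]) simp
qed

lemma X2_sm: assumes "\<forall>\<beta>\<in>S. Dl q d \<beta> > 0" shows "(\<lambda>\<beta>. X2 q d \<beta>) \<in> sm S"
proof -
  have a: "(\<lambda>\<beta>. sqrt (Dl q d \<beta>)) \<in> sm S" by (rule sm_sqrt[OF Dl_sm assms])
  have b: "(\<lambda>\<beta>. 2 * exp \<beta>) \<in> sm S" by (intro sm_mult sm_const sm_exp sm_id)
  show ?thesis unfolding X2_def
    by (rule sm_divide[OF sm_add[OF sm_uminus[OF Cc_sm] a] b]) simp
qed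

lemma hh_sm:
  assumes q: "q \<ge> 2" and g: "g \<in> sm S" "\<forall>\<beta>\<in>S. g \<beta> > 0"
  shows "(\<lambda>\<beta>. hh q d \<beta> (ln (g \<beta>))) \<in> sm S"
proof -
  have l: "(\<lambda>\<beta>. ln (g \<beta>)) \<in> sm S" by (rule sm_ln[OF g])
  have e: "(\<lambda>\<beta>. exp (ln (g \<beta>))) \<in> sm S" by (rule sm_exp[OF l])
  have A: "(\<lambda>\<beta>. exp \<beta> * exp (ln (g \<beta>)) + real q - 1) \<in> sm S"
    by (intro sm_diff sm_add sm_mult sm_exp sm_id sm_const e)
  have B: "(\<lambda>\<beta>. exp (ln (g \<beta>)) + exp \<beta> + real q - 2) \<in> sm S"
    by (intro sm_diff sm_add sm_exp sm_id sm_const e)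
  have Ap: "\<forall>\<beta>\<in>S. exp \<beta> * exp (ln (g \<beta>)) + real q - 1 > 0" using pos_ND(1)[OF q] by blast
  have Bp: "\<forall>\<beta>\<in>S. exp (ln (g \<beta>)) + exp \<beta> + real q - 2 > 0" using pos_ND(2)[OF q] by blast
  show ?thesis unfolding hh_def
    by (rule sm_diff[OF l sm_mult[OF sm_const sm_diff[OF sm_ln[OF A Ap] sm_ln[OF B Bp]]]])
qed

lemma card_one:
  assumes q: "q \<ge> 2" and d: "d \<ge> 2" and b: "\<beta> \<ge> 0" and D: "Dl q d \<beta> \<le> 0"
  shows "card (fixed_points q d \<beta> B) = 1"
  unfolding fp_eq[OF q]
proof (rule one_count[OF hh_der[OF q]])
  show "\<exists>z. hh q d \<beta> z < y" for y using hh_lo_hi q d b by force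
  show "\<exists>z. hh q d \<beta> z > y" for y using hh_lo_hi q d b by force
  show "0 \<le> hdv q d \<beta> r" for r using hdv_sign[OF q, of d \<beta> r] PP_nonneg(1)[OF D, of "exp r"] by linarith
  show "r = s" if "hdv q d \<beta> r = 0" "hdv q d \<beta> s = 0" for r s
    using that PP_nonneg(2)[OF D, of "exp r" "exp s"] hdv_sign(3)[OF q] by auto
qed

lemma roots_pos:
  assumes "Dl q d \<beta> > 0" "Cc q d \<beta> < 0" "q \<ge> 2"
  shows "0 < X1 q d \<beta>" "X1 q d \<beta> < X2 q d \<beta>"
proof -
  have q': "real q \<ge> 2" using assms(3) by simp
  have "exp \<beta> > 0" by simp
  then have "exp \<beta> + real q - 2 > 0" "real q - 1 > 0" using q' by linarith+
  then have "4 * exp \<beta> * (real q - 1) * (exp \<beta> + real q - 2) > 0"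
    by (intro mult_pos_pos) auto
  then have "Dl q d \<beta> < Cc q d \<beta> * Cc q d \<beta>" unfolding Dl_def by linarith
  then have "sqrt (Dl q d \<beta>) < sqrt (Cc q d \<beta> * Cc q d \<beta>)" by (simp only: real_sqrt_less_iff)
  also have "\<dots> = - Cc q d \<beta>" using assms(2) by simp
  finally show "0 < X1 q d \<beta>" unfolding X1_def by simp
  have "sqrt (Dl q d \<beta>) > 0" using assms by simp
  then show "X1 q d \<beta> < X2 q d \<beta>" unfolding X1_def X2_def by (simp add: divide_strict_right_mono)
qed

lemma card_three:
  assumes q: "q \<ge> 2" and d: "d \<ge> 2" and b: "\<beta> \<ge> 0" and D: "Dl q d \<beta> > 0" and C: "Cc q d \<beta> < 0"
  defines "r1 \<equiv> ln (X1 q d \<beta>)" and "r2 \<equiv> ln (X2 q d \<beta>)"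
  shows "hh q d \<beta> r2 < hh q d \<beta> r1"
    and "B < hh q d \<beta> r2 \<or> hh q d \<beta> r1 < B \<Longrightarrow> card (fixed_points q d \<beta> B) = 1"
    and "B = hh q d \<beta> r2 \<or> B = hh q d \<beta> r1 \<Longrightarrow> card (fixed_points q d \<beta> B) = 2"
    and "hh q d \<beta> r2 < B \<and> B < hh q d \<beta> r1 \<Longrightarrow> card (fixed_points q d \<beta> B) = 3"
proof -
  note rp = roots_pos[OF D C q]
  have x2p: "X2 q d \<beta> > 0" using rp by linarith
  have r12: "r1 < r2" unfolding r1_def r2_def using rp by simp
  have e1: "exp r1 = X1 q d \<beta>" "exp r2 = X2 q d \<beta>" unfolding r1_def r2_def using rp x2p by auto
  have P: "PP q d \<beta> (exp r) = exp \<beta> * (exp r - X1 q d \<beta>) * (exp r - X2 q d \<beta>)" for r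
    by (rule PP_roots[OF D])
  have p1: "hdv q d \<beta> r > 0" if "r < r1" for r
  proof -
    have "exp r < X1 q d \<beta>" using that e1 by (metis exp_less_cancel_iff)
    then have "(exp r - X1 q d \<beta>) * (exp r - X2 q d \<beta>) > 0" using rp by (intro mult_neg_neg) auto
    then have "exp \<beta> * ((exp r - X1 q d \<beta>) * (exp r - X2 q d \<beta>)) > 0" by simp
    then show ?thesis unfolding hdv_sign(1)[OF q] P by (simp add: mult.assoc)
  qed
  have n2: "hdv q d \<beta> r < 0" if "r1 < r" "r < r2" for r
  proof -
    have "exp r > X1 q d \<beta>" "exp r < X2 q d \<beta>" using that e1 by (metis exp_less_cancel_iff)+
    then show ?thesis unfolding hdv_sign(2)[OF q] P by (intro mult_pos_neg mult_pos_pos) auto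
  qed
  have p3: "hdv q d \<beta> r > 0" if "r2 < r" for r
  proof -
    have "exp r > X2 q d \<beta>" using that e1 by (metis exp_less_cancel_iff)
    then show ?thesis unfolding hdv_sign(1)[OF q] P using rp by (intro mult_pos_pos) auto
  qed
  have lo: "\<And>y. \<exists>z. hh q d \<beta> z < y" and hi: "\<And>y. \<exists>z. hh q d \<beta> z > y"
    using hh_lo_hi q d b by force+
  note T = three_count[OF hh_der[OF q] lo hi r12 p1 n2 p3]
  show "hh q d \<beta> r2 < hh q d \<beta> r1" by (rule T(1))
  show "B < hh q d \<beta> r2 \<or> hh q d \<beta> r1 < B \<Longrightarrow> card (fixed_points q d \<beta> B) = 1"
    unfolding fp_eq[OF q] by (rule T(2))
  show "B = hh q d \<beta> r2 \<or> B = hh q d \<beta> r1 \<Longrightarrow> card (fixed_points q d \<beta> B) = 2"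
    unfolding fp_eq[OF q] by (rule T(3))
  show "hh q d \<beta> r2 < B \<and> B < hh q d \<beta> r1 \<Longrightarrow> card (fixed_points q d \<beta> B) = 3"
    unfolding fp_eq[OF q] by (rule T(4))
qed



definition KK :: "nat \<Rightarrow> nat \<Rightarrow> real" where
  "KK q d = (real q - 1) * (real d)^2 / (real d - 2)^2"
definition TS :: "nat \<Rightarrow> nat \<Rightarrow> real" where
  "TS q d = ((2 - real q) + sqrt ((real q - 2)^2 + 4 * KK q d)) / 2"

lemma KK_prop:
  assumes "q \<ge> 2" "d > 2"
  shows "(real d - 2)^2 * KK q d = (real q - 1) * (real d)^2" "KK q d > real q - 1"
    "(real d - 2) * KK q d > real d * (real q - 1)"
proof -
  have d: "real d - 2 > 0" using assms by simp
  have q: "real q - 1 > 0" using assms by simp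
  have d2nz: "(real d - 2)^2 \<noteq> 0" using d by simp
  show e: "(real d - 2)^2 * KK q d = (real q - 1) * (real d)^2" unfolding KK_def
    by (metis d2nz nonzero_mult_div_cancel_left times_divide_eq_right)
  have "(real d - 2)^2 < (real d)^2" using d by (simp add: power_strict_mono)
  then have "(real d - 2)^2 * (real q - 1) < (real q - 1) * (real d)^2" using q by simp
  then have "(real d - 2)^2 * (real q - 1) < (real d - 2)^2 * KK q d" using e by simp
  then show "KK q d > real q - 1" using d by simp
  have gen: "\<And>(e::real) A. e > 0 \<Longrightarrow> e * (A / (e * e)) = A / e" by (simp add: field_simps)
  have "(real d - 2) * KK q d = (real q - 1) * real d * real d / (real d - 2)"
    unfolding KK_def power2_eq_square using gen[OF d] by (simp add: mult.assoc)
  moreover have "real d * (real q - 1) * (real d - 2) < (real q - 1) * real d * real d"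
  proof -
    have "2 * (real q - 1) * real d > 0" using q assms by simp
    then show ?thesis by (simp add: algebra_simps)
  qed
  ultimately show "(real d - 2) * KK q d > real d * (real q - 1)"
    using d by (simp add: pos_less_divide_eq)
qed

lemma TS_prop:
  assumes "q \<ge> 2" "d > 2"
  shows "TS q d * (TS q d + real q - 2) = KK q d" "TS q d > 1"
proof -
  define R where "R = sqrt ((real q - 2)^2 + 4 * KK q d)"
  have Kp: "KK q d > real q - 1" using KK_prop[OF assms] by simp
  have q: "real q \<ge> 2" using assms by simp
  have nn: "0 \<le> (real q - 2)^2 + 4 * KK q d" proof -
    have "KK q d > 0" using Kp q by linarith
    then show ?thesis by (intro add_nonneg_nonneg) auto
  qed
  have RR: "R * R = (real q - 2)^2 + 4 * KK q d" unfolding R_def using nn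
    by (metis real_sqrt_mult_self abs_of_nonneg)
  have TSd: "TS q d = ((2 - real q) + R) / 2" unfolding TS_def R_def ..
  show e: "TS q d * (TS q d + real q - 2) = KK q d" unfolding TSd
    using RR by (simp add: field_simps power2_eq_square)
  have "R \<ge> 0" unfolding R_def using nn by simp
  have "R * R > real q * real q" using RR Kp by (simp add: power2_eq_square algebra_simps)
  then have "R > real q" using \<open>R \<ge> 0\<close> q
    by (metis mult_mono not_le of_nat_0_le_iff)
  then show "TS q d > 1" unfolding TSd by simp
qed

lemma u_mono:
  assumes "q \<ge> 2" "0 < s" "s \<le> t"
  shows "s * (s + real q - 2) \<le> t * (t + real q - 2)"
  using assms by (intro mult_mono) auto

lemma u_smono:
  assumes "q \<ge> 2" "0 < s" "s < t"
  shows "s * (s + real q - 2) < t * (t + real q - 2)"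
  using assms by (intro mult_strict_mono) auto

lemma Dl_nonpos:
  assumes q: "q \<ge> 2" and d: "d \<ge> 2" and b: "\<beta> \<ge> 0"
    and u: "d = 2 \<or> exp \<beta> * (exp \<beta> + real q - 2) \<le> KK q d"
  shows "Dl q d \<beta> \<le> 0"
proof -
  define u where "u = exp \<beta> * (exp \<beta> + real q - 2)"
  have "1 * (1 + real q - 2) \<le> u" unfolding u_def using b q by (intro u_mono) auto
  then have u1: "u - (real q - 1) \<ge> 0" by simp
  have "(real d - 2)^2 * u - (real q - 1) * (real d)^2 \<le> 0"
  proof (cases "d = 2")
    case True then show ?thesis using q by simp
  next
    case False
    then have "d > 2" "u \<le> KK q d" using d u unfolding u_def by auto
    then have "(real d - 2)^2 * u \<le> (real d - 2)^2 * KK q d" by (simp add: mult_left_mono)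
    then show ?thesis using KK_prop(1)[OF q \<open>d > 2\<close>] by simp
  qed
  then show ?thesis unfolding Dl_factor u_def[symmetric] using u1 by (simp add: mult_nonneg_nonpos)
qed

lemma Dl_pos:
  assumes q: "q \<ge> 2" and d: "d > 2" and u: "exp \<beta> * (exp \<beta> + real q - 2) > KK q d"
  shows "Dl q d \<beta> > 0" "Cc q d \<beta> < 0"
proof -
  define u where "u = exp \<beta> * (exp \<beta> + real q - 2)"
  note K = KK_prop[OF q d]
  have d2: "(real d - 2)^2 > 0" "real d - 2 > 0" using d by auto
  have "u - (real q - 1) > 0" using u K(2) unfolding u_def by simp
  moreover have "(real d - 2)^2 * u - (real q - 1) * (real d)^2 > 0"
    using u K(1) d2 unfolding u_def[symmetric] by (metis diff_gt_0_iff_gt mult_strict_left_mono)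
  ultimately show "Dl q d \<beta> > 0" unfolding Dl_factor u_def[symmetric] by simp
  have "(real d - 2) * u > (real d - 2) * KK q d" using u d2 unfolding u_def by simp
  then show "Cc q d \<beta> < 0" using K(3) unfolding Cc_def u_def by simp
qed

lemma Cc_cont: "isCont (Cc q d) x"
  unfolding Cc_def[abs_def] by (intro continuous_intros)
lemma Dl_cont: "isCont (Dl q d) x"
  unfolding Dl_def[abs_def] by (intro continuous_intros Cc_cont)
lemma X1_cont: "isCont (X1 q d) x"
  unfolding X1_def[abs_def] by (intro continuous_intros Cc_cont Dl_cont) auto
lemma X2_cont: "isCont (X2 q d) x"
  unfolding X2_def[abs_def] by (intro continuous_intros Cc_cont Dl_cont) auto

lemma hh_cont:
  assumes q: "q \<ge> 2" and g: "isCont g x" "g x > 0"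
  shows "isCont (\<lambda>\<beta>. hh q d \<beta> (ln (g \<beta>))) x"
  unfolding hh_def using pos_ND[OF q, of x "ln (g x)"] g
  by (intro continuous_intros) auto



theorem mainTheorem18:
  fixes q d :: nat
  assumes "q \<ge> 2" and "d \<ge> 2"
  shows "\<exists>\<beta>m :: ereal. 0 < \<beta>m \<and> (\<beta>m = \<infinity> \<longleftrightarrow> d = 2) \<and>
    (\<forall>\<beta> B. 0 \<le> \<beta> \<and> ereal \<beta> \<le> \<beta>m \<longrightarrow> card (fixed_points q d \<beta> B) = 1) \<and>
    (\<exists>Bm Bp :: real \<Rightarrow> real.
       smooth_on {\<beta>. \<beta>m < ereal \<beta>} Bm \<and> smooth_on {\<beta>. \<beta>m < ereal \<beta>} Bp \<and>
       (\<forall>\<beta>. \<beta>m < ereal \<beta> \<longrightarrow>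
          Bm \<beta> < Bp \<beta> \<and>
          (\<forall>B. (B < Bm \<beta> \<or> Bp \<beta> < B) \<longrightarrow> card (fixed_points q d \<beta> B) = 1) \<and>
          (\<forall>B. (B = Bm \<beta> \<or> B = Bp \<beta>) \<longrightarrow> card (fixed_points q d \<beta> B) = 2) \<and>
          (\<forall>B. Bm \<beta> < B \<and> B < Bp \<beta> \<longrightarrow> card (fixed_points q d \<beta> B) = 3)) \<and>
       (\<forall>b. \<beta>m = ereal b \<longrightarrow>
          (\<exists>L. (Bm \<longlongrightarrow> L) (at_right b) \<and> (Bp \<longlongrightarrow> L) (at_right b))))"
proof (cases "d = 2")
  case True
  have one: "card (fixed_points q d \<beta> B) = 1" if "0 \<le> \<beta>" for \<beta> B
    by (rule card_one[OF assms that Dl_nonpos[OF assms that]]) (use True in simp)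
  have sm: "smooth_on {\<beta>. (\<infinity>::ereal) < ereal \<beta>} f" for f
    unfolding smooth_on_def by simp
  show ?thesis
    by (rule exI[of _ "\<infinity>"]) (use True one sm in auto)
next
  case False
  then have d: "d > 2" using assms by simp
  note q = assms(1)
  define b where "b = ln (TS q d)"
  have TS1: "TS q d > 1" using TS_prop[OF q d] by simp
  have eb: "exp b = TS q d" unfolding b_def using TS1 by simp
  have b0: "b > 0" unfolding b_def using TS1 by simp
  define S where "S = {\<beta>. ereal b < ereal \<beta>}"
  have S: "S = {b<..}" unfolding S_def by auto
  have Sopen: "open S" unfolding S by simp
  have uK: "exp \<beta> * (exp \<beta> + real q - 2) > KK q d" if "b < \<beta>" for \<beta>
  proof -
    have "exp \<beta> > TS q d" using that eb by (metis exp_less_cancel_iff)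
    then show ?thesis using u_smono[OF q _ \<open>exp \<beta> > TS q d\<close>] TS1 TS_prop(1)[OF q d] by simp
  qed
  have DS: "Dl q d \<beta> > 0" "Cc q d \<beta> < 0" if "b < \<beta>" for \<beta>
    using Dl_pos[OF q d uK[OF that]] by auto
  have X1S: "X1 q d \<beta> > 0" "X2 q d \<beta> > 0" if "b < \<beta>" for \<beta>
    using roots_pos[OF DS[OF that] q] by auto
  define Bp where "Bp = (\<lambda>\<beta>. hh q d \<beta> (ln (X1 q d \<beta>)))"
  define Bm where "Bm = (\<lambda>\<beta>. hh q d \<beta> (ln (X2 q d \<beta>)))"
  have smp: "smooth_on S Bp"
    unfolding Bp_def
    by (rule sm_smooth[OF Sopen hh_sm[OF q X1_sm]]) (use DS X1S in \<open>auto simp: S\<close>)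
  have smm: "smooth_on S Bm"
    unfolding Bm_def
    by (rule sm_smooth[OF Sopen hh_sm[OF q X2_sm]]) (use DS X1S in \<open>auto simp: S\<close>)
  have one: "card (fixed_points q d \<beta> B) = 1" if "0 \<le> \<beta>" "ereal \<beta> \<le> ereal b" for \<beta> B
  proof -
    have "\<beta> \<le> b" using that by simp
    then have "exp \<beta> \<le> TS q d" using eb by (metis exp_le_cancel_iff)
    then have "exp \<beta> * (exp \<beta> + real q - 2) \<le> KK q d"
      using u_mono[OF q _ \<open>exp \<beta> \<le> TS q d\<close>] TS_prop(1)[OF q d] by simp
    then have "Dl q d \<beta> \<le> 0" using Dl_nonpos[OF q assms(2) that(1)] by blast
    then show ?thesis by (rule card_one[OF q assms(2) that(1)])
  qed
  have three: "Bm \<beta> < Bp \<beta> \<and>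
          (\<forall>B. (B < Bm \<beta> \<or> Bp \<beta> < B) \<longrightarrow> card (fixed_points q d \<beta> B) = 1) \<and>
          (\<forall>B. (B = Bm \<beta> \<or> B = Bp \<beta>) \<longrightarrow> card (fixed_points q d \<beta> B) = 2) \<and>
          (\<forall>B. Bm \<beta> < B \<and> B < Bp \<beta> \<longrightarrow> card (fixed_points q d \<beta> B) = 3)"
    if "ereal b < ereal \<beta>" for \<beta>
  proof -
    have bb: "b < \<beta>" using that by simp
    then have b0': "\<beta> \<ge> 0" using b0 by simp
    note C = card_three[OF q assms(2) b0' DS[OF bb]]
    show ?thesis unfolding Bm_def Bp_def using C by blast
  qed
  have Db: "Dl q d b = 0"
  proof -
    have "exp b * (exp b + real q - 2) = KK q d" using eb TS_prop(1)[OF q d] by simp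
    then show ?thesis unfolding Dl_factor using KK_prop(1)[OF q d] by simp
  qed
  have Cb: "Cc q d b < 0"
  proof -
    have "exp b * (exp b + real q - 2) = KK q d" using eb TS_prop(1)[OF q d] by simp
    then show ?thesis unfolding Cc_def using KK_prop(3)[OF q d] by simp
  qed
  have X12: "X1 q d b = X2 q d b" unfolding X1_def X2_def Db by simp
  have X1b: "X1 q d b > 0" unfolding X1_def Db using Cb by (simp add: divide_neg_pos)
  have X2b: "X2 q d b > 0" using X1b X12 by simp
  have cp: "isCont Bp b" unfolding Bp_def by (rule hh_cont[OF q X1_cont X1b])
  have cm: "isCont Bm b" unfolding Bm_def by (rule hh_cont[OF q X2_cont X2b])
  have eqb: "Bm b = Bp b" unfolding Bm_def Bp_def X12 ..
  have lim: "(Bm \<longlongrightarrow> Bp b) (at_right b) \<and> (Bp \<longlongrightarrow> Bp b) (at_right b)"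
    using cp cm eqb unfolding isCont_def
    by (metis at_within_le_at tendsto_mono)
  show ?thesis
  proof (rule exI[of _ "ereal b"], intro conjI)
    show "0 < ereal b" using b0 by simp
    show "(ereal b = \<infinity>) = (d = 2)" using False by simp
    show "\<forall>\<beta> B. 0 \<le> \<beta> \<and> ereal \<beta> \<le> ereal b \<longrightarrow> card (fixed_points q d \<beta> B) = 1"
      using one by blast
    show "\<exists>Bm Bp. smooth_on {\<beta>. ereal b < ereal \<beta>} Bm \<and> smooth_on {\<beta>. ereal b < ereal \<beta>} Bp \<and>
       (\<forall>\<beta>. ereal b < ereal \<beta> \<longrightarrow>
          Bm \<beta> < Bp \<beta> \<and>
          (\<forall>B. (B < Bm \<beta> \<or> Bp \<beta> < B) \<longrightarrow> card (fixed_points q d \<beta> B) = 1) \<and>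
          (\<forall>B. (B = Bm \<beta> \<or> B = Bp \<beta>) \<longrightarrow> card (fixed_points q d \<beta> B) = 2) \<and>
          (\<forall>B. Bm \<beta> < B \<and> B < Bp \<beta> \<longrightarrow> card (fixed_points q d \<beta> B) = 3)) \<and>
       (\<forall>b'. ereal b = ereal b' \<longrightarrow>
          (\<exists>L. (Bm \<longlongrightarrow> L) (at_right b') \<and> (Bp \<longlongrightarrow> L) (at_right b')))"
      using smm smp three lim unfolding S_def by auto
  qed
qed

end
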